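(* Let $X$ be a finite set and let $S: X\times X\to X\times X$, $S(x,y)=(g_x(y),f_y(x))$, be a non-degenerate symmetric set-theoretical solution of the quantum Yang–Baxter equation which is not the trivial solution. Let $G(X,S)=\langle X \mid xy=g_x(y)f_y(x),\ x,y\in X\rangle$ be its structure group. Then $G(X,S)$ is not bi-orderable. Furthermore, $G(X,S)$ has generalized torsion elements.
   Context: A set-theoretical solution is a pair $(X,S)$ with $S:X\times X\to X\times X$ a bijection written $S(x,y)=(g_x(y),f_y(x))$ for functions $f_x,g_x:X\to X$. It is non-degenerate if all $f_x,g_x$ are bijections; involutive if $S\circ S=\mathrm{Id}$; braided if $S^{12}S^{23}S^{12}=S^{23}S^{12}S^{23}$ on $X^3$ (where $S^{i,i+1}$ acts on the $i$-th and $(i+1)$-th components); symmetric if involutive and braided. The solution is trivial if $f_x=g_x=\mathrm{Id}_X$ for all $x\in X$. A group is bi-orderable if it admits a strict total order invariant under both left and right multiplication. An element $g\neq 1$ of a group $G$ is a generalized torsion element if there exist $h_1,\dots,h_n\in G$ with $\prod_{i=1}^n h_igh_i^{-1}=1$. *)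

theory Defs
  imports "HOL-Algebra.Group"
begin

text \<open>A set-theoretical solution on the (finite) type 'a, written
  S(x,y) = (g x y, f y x), i.e. g x = g_x and f y = f_y.\<close>

definition sol_map :: "('a \<Rightarrow> 'a \<Rightarrow> 'a) \<Rightarrow> ('a \<Rightarrow> 'a \<Rightarrow> 'a) \<Rightarrow> 'a \<times> 'a \<Rightarrow> 'a \<times> 'a" where
  "sol_map g f = (\<lambda>(x, y). (g x y, f y x))"

definition non_degenerate :: "('a \<Rightarrow> 'a \<Rightarrow> 'a) \<Rightarrow> ('a \<Rightarrow> 'a \<Rightarrow> 'a) \<Rightarrow> bool" where
  "non_degenerate g f \<longleftrightarrow> (\<forall>x. bij (f x) \<and> bij (g x))"

definition involutive_sol :: "('a \<Rightarrow> 'a \<Rightarrow> 'a) \<Rightarrow> ('a \<Rightarrow> 'a \<Rightarrow> 'a) \<Rightarrow> bool" where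
  "involutive_sol g f \<longleftrightarrow> sol_map g f \<circ> sol_map g f = id"

definition S12 :: "('a \<times> 'a \<Rightarrow> 'a \<times> 'a) \<Rightarrow> 'a \<times> 'a \<times> 'a \<Rightarrow> 'a \<times> 'a \<times> 'a" where
  "S12 S = (\<lambda>(x, y, z). let (u, v) = S (x, y) in (u, v, z))"

definition S23 :: "('a \<times> 'a \<Rightarrow> 'a \<times> 'a) \<Rightarrow> 'a \<times> 'a \<times> 'a \<Rightarrow> 'a \<times> 'a \<times> 'a" where
  "S23 S = (\<lambda>(x, y, z). let (v, w) = S (y, z) in (x, v, w))"

definition braided_sol :: "('a \<Rightarrow> 'a \<Rightarrow> 'a) \<Rightarrow> ('a \<Rightarrow> 'a \<Rightarrow> 'a) \<Rightarrow> bool" where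
  "braided_sol g f \<longleftrightarrow>
     S12 (sol_map g f) \<circ> S23 (sol_map g f) \<circ> S12 (sol_map g f)
   = S23 (sol_map g f) \<circ> S12 (sol_map g f) \<circ> S23 (sol_map g f)"

definition symmetric_sol :: "('a \<Rightarrow> 'a \<Rightarrow> 'a) \<Rightarrow> ('a \<Rightarrow> 'a \<Rightarrow> 'a) \<Rightarrow> bool" where
  "symmetric_sol g f \<longleftrightarrow> involutive_sol g f \<and> braided_sol g f"

definition trivial_sol :: "('a \<Rightarrow> 'a \<Rightarrow> 'a) \<Rightarrow> ('a \<Rightarrow> 'a \<Rightarrow> 'a) \<Rightarrow> bool" where
  "trivial_sol g f \<longleftrightarrow> (\<forall>x. f x = id \<and> g x = id)"

text \<open>Structure group as a presentation: words over letters (x, b), where b = True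
  marks the formal inverse of generator x; the congruence generated by free
  cancellation and the relations x y = g_x(y) f_y(x).\<close>

inductive weq :: "('a \<Rightarrow> 'a \<Rightarrow> 'a) \<Rightarrow> ('a \<Rightarrow> 'a \<Rightarrow> 'a) \<Rightarrow> ('a \<times> bool) list \<Rightarrow> ('a \<times> bool) list \<Rightarrow> bool"
  for g f where
  weq_refl: "weq g f u u"
| weq_sym: "weq g f u v \<Longrightarrow> weq g f v u"
| weq_trans: "weq g f u v \<Longrightarrow> weq g f v w \<Longrightarrow> weq g f u w"
| weq_cong: "weq g f u v \<Longrightarrow> weq g f (a @ u @ b) (a @ v @ b)"
| weq_cancel: "weq g f [(x, b), (x, \<not> b)] []"
| weq_rel: "weq g f [(x, False), (y, False)] [(g x y, False), (f y x, False)]"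

definition structure_group :: "('a \<Rightarrow> 'a \<Rightarrow> 'a) \<Rightarrow> ('a \<Rightarrow> 'a \<Rightarrow> 'a) \<Rightarrow> ('a \<times> bool) list set monoid" where
  "structure_group g f =
     \<lparr> carrier = UNIV // {(u, v). weq g f u v},
       mult = (\<lambda>A B. {w. \<exists>u\<in>A. \<exists>v\<in>B. weq g f w (u @ v)}),
       one = {w. weq g f w []} \<rparr>"

definition bi_orderable :: "('b, 'c) monoid_scheme \<Rightarrow> bool" where
  "bi_orderable G \<longleftrightarrow> (\<exists>R :: 'b \<Rightarrow> 'b \<Rightarrow> bool.
      (\<forall>a\<in>carrier G. \<not> R a a) \<and>
      (\<forall>a\<in>carrier G. \<forall>b\<in>carrier G. \<forall>c\<in>carrier G. R a b \<longrightarrow> R b c \<longrightarrow> R a c) \<and>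
      (\<forall>a\<in>carrier G. \<forall>b\<in>carrier G. a \<noteq> b \<longrightarrow> R a b \<or> R b a) \<and>
      (\<forall>a\<in>carrier G. \<forall>b\<in>carrier G. \<forall>c\<in>carrier G.
          R a b \<longrightarrow> R (c \<otimes>\<^bsub>G\<^esub> a) (c \<otimes>\<^bsub>G\<^esub> b) \<and> R (a \<otimes>\<^bsub>G\<^esub> c) (b \<otimes>\<^bsub>G\<^esub> c)))"

definition generalized_torsion :: "('b, 'c) monoid_scheme \<Rightarrow> 'b \<Rightarrow> bool" where
  "generalized_torsion G t \<longleftrightarrow> t \<in> carrier G \<and> t \<noteq> \<one>\<^bsub>G\<^esub> \<and>
     (\<exists>hs. hs \<noteq> [] \<and> set hs \<subseteq> carrier G \<and>
        foldr (\<lambda>h acc. h \<otimes>\<^bsub>G\<^esub> t \<otimes>\<^bsub>G\<^esub> inv\<^bsub>G\<^esub> h \<otimes>\<^bsub>G\<^esub> acc) hs \<one>\<^bsub>G\<^esub> = \<one>\<^bsub>G\<^esub>)"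

end

theory Submission
  imports Defs
begin



definition ev :: "'a \<Rightarrow> 'a \<Rightarrow> int" where "ev x z = (if z = x then 1 else 0)"

type_synonym 'a trip = "('a \<Rightarrow> int) \<times> ('a \<Rightarrow> 'a) \<times> ('a \<Rightarrow> 'a)"

definition tm :: "'a trip \<Rightarrow> 'a trip \<Rightarrow> 'a trip" where
  "tm a b = (case a of (v,s,s') \<Rightarrow> case b of (w,t,t') \<Rightarrow> (\<lambda>z. v z + w (s' z), s \<circ> t, t' \<circ> s'))"

definition tone :: "'a trip" where "tone = (\<lambda>z. 0, id, id)"

lemma tm_assoc: "tm (tm a b) c = tm a (tm b c)"
  by (cases a; cases b; cases c) (auto simp: tm_def comp_def)

lemma tm_one[simp]: "tm tone a = a" "tm a tone = a"
  by (cases a; auto simp: tm_def tone_def comp_def)+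

fun L :: "('a \<Rightarrow> 'a \<Rightarrow> 'a) \<Rightarrow> 'a \<times> bool \<Rightarrow> 'a trip" where
  "L g (x, False) = (ev x, g x, inv_into UNIV (g x))"
| "L g (x, True) = (\<lambda>z. - ev x (g x z), inv_into UNIV (g x), g x)"

fun Cw :: "('a \<Rightarrow> 'a \<Rightarrow> 'a) \<Rightarrow> ('a \<times> bool) list \<Rightarrow> 'a trip" where
  "Cw g [] = tone"
| "Cw g (l # w) = tm (L g l) (Cw g w)"

lemma Cw_append: "Cw g (u @ v) = tm (Cw g u) (Cw g v)"
  by (induction u) (auto simp: tm_assoc)

lemma Cw_weq:
  assumes bj: "\<And>x. bij (g x)"
    and i1: "\<And>x y. g (g x y) (f y x) = x"
    and br: "\<And>x y. g (g x y) \<circ> g (f y x) = g x \<circ> g y"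
  shows "weq g f u v \<Longrightarrow> Cw g u = Cw g v"
proof (induction rule: weq.induct)
  case (weq_cong u v a b)
  then show ?case by (simp add: Cw_append)
next
  case (weq_cancel x b)
  have a: "g x (inv_into UNIV (g x) z) = z" "inv_into UNIV (g x) (g x z) = z" for z
    using bj[of x] by (auto simp: bij_def surj_f_inv_f)
  show ?case
    by (cases b) (auto simp: tm_def tone_def comp_def a fun_eq_iff)
next
  case (weq_rel x y)
  define u where "u = g x y"
  define v where "v = f y x"
  have e1: "ev y (inv_into UNIV (g x) z) = ev u z" for z
    using bj[of x] unfolding u_def ev_def
    by (auto simp: bij_def surj_f_inv_f)
  have e2: "ev v (inv_into UNIV (g u) z) = ev x z" for z
  proof -
    have "(inv_into UNIV (g u) z = v) = (z = x)"
      using bij_inv_eq_iff[OF bj[of u], of v z] i1[of x y] unfolding u_def v_def by auto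
    then show ?thesis unfolding ev_def by auto
  qed
  have e3: "g u \<circ> g v = g x \<circ> g y" using br unfolding u_def v_def by simp
  have e4: "inv_into UNIV (g v) \<circ> inv_into UNIV (g u) = inv_into UNIV (g y) \<circ> inv_into UNIV (g x)"
    using e3 by (metis bj o_inv_distrib)
  show ?case
    using e1 e2 e3 e4 by (auto simp: tm_def tone_def fun_eq_iff u_def v_def comp_def)
qed auto




definition pos :: "'a list \<Rightarrow> ('a \<times> bool) list" where "pos w = map (\<lambda>x. (x, False)) w"

fun Z :: "('a \<Rightarrow> 'a \<Rightarrow> 'a) \<Rightarrow> 'a list \<Rightarrow> 'a \<Rightarrow> nat" where
  "Z g [] = (\<lambda>z. 0)"
| "Z g (x # w) = (\<lambda>z. (if z = x then 1 else 0) + Z g w (inv_into UNIV (g x) z))"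

fun Ph :: "('a \<Rightarrow> 'a \<Rightarrow> 'a) \<Rightarrow> 'a list \<Rightarrow> 'a \<Rightarrow> 'a" where
  "Ph g [] = id"
| "Ph g (x # w) = g x \<circ> Ph g w"

fun Phi :: "('a \<Rightarrow> 'a \<Rightarrow> 'a) \<Rightarrow> 'a list \<Rightarrow> 'a \<Rightarrow> 'a" where
  "Phi g [] = id"
| "Phi g (x # w) = Phi g w \<circ> inv_into UNIV (g x)"

lemma Cw_pos: "Cw g (pos w) = (\<lambda>z. int (Z g w z), Ph g w, Phi g w)"
  by (induction w) (auto simp: pos_def tone_def tm_def ev_def fun_eq_iff)

lemma weq_consI: "weq g f u v \<Longrightarrow> weq g f (l # u) (l # v)"
  using weq_cong[of g f u v "[l]" "[]"] by simp

lemma weq_appR: "weq g f u v \<Longrightarrow> weq g f (u @ b) (v @ b)"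
  using weq_cong[of g f u v "[]" b] by simp

lemma weq_appL: "weq g f u v \<Longrightarrow> weq g f (a @ u) (a @ v)"
  using weq_cong[of g f u v a "[]"] by simp

locale sol =
  fixes g f :: "'a::finite \<Rightarrow> 'a \<Rightarrow> 'a"
  assumes bj: "\<And>x. bij (g x)"
    and i1: "\<And>x y. g (g x y) (f y x) = x"
    and br: "\<And>x y. g (g x y) \<circ> g (f y x) = g x \<circ> g y"
begin

lemma gi[simp]: "g x (inv_into UNIV (g x) z) = z" "inv_into UNIV (g x) (g x z) = z"
  using bj[of x] by (auto simp: bij_def surj_f_inv_f)

lemma Cw_weq': "weq g f u v \<Longrightarrow> Cw g u = Cw g v"
  by (rule Cw_weq[OF bj i1 br])

lemma weq_Z: "weq g f (pos a) (pos b) \<Longrightarrow> Z g a = Z g b"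
proof -
  assume "weq g f (pos a) (pos b)"
  then have "Cw g (pos a) = Cw g (pos b)" by (rule Cw_weq')
  then have "(\<lambda>z. int (Z g a z)) = (\<lambda>z. int (Z g b z))" by (simp add: Cw_pos)
  then show ?thesis by (auto simp: fun_eq_iff)
qed

lemma sum_comp_g: "sum (\<lambda>z. h (g q z)) UNIV = sum h UNIV"
proof -
  have r: "range (g q) = UNIV" using bj[of q] by (simp add: bij_def)
  have "sum h UNIV = sum h (range (g q))" by (simp add: r)
  also have "\<dots> = sum (h \<circ> g q) UNIV" by (rule sum.reindex) (use bj[of q] in \<open>simp add: bij_def\<close>)
  finally show ?thesis by (simp add: comp_def)
qed

lemma sum_comp_gi: "sum (\<lambda>z. h (inv_into UNIV (g q) z)) UNIV = sum h UNIV"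
  using sum_comp_g[of "\<lambda>z. h (inv_into UNIV (g q) z)" q] by simp

lemma Z_length: "sum (Z g w) UNIV = length w"
proof (induction w)
  case (Cons x w)
  have "sum (Z g (x # w)) UNIV = sum (\<lambda>z. if z = x then 1 else 0) UNIV + sum (\<lambda>z. Z g w (inv_into UNIV (g x) z)) UNIV"
    by (simp add: sum.distrib)
  also have "\<dots> = 1 + length w" using Cons sum_comp_gi[of "Z g w" x] by simp
  finally show ?case by simp
qed simp

lemma Z_surj: "\<exists>w. Z g w = v"
proof (induction "sum v UNIV" arbitrary: v)
  case 0
  then have "v = (\<lambda>z. 0)" by (auto simp: fun_eq_iff)
  then show ?case by (intro exI[of _ "[]"]) simp
next
  case (Suc n)
  have "\<exists>q. v q > 0"
  proof (rule ccontr)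
    assume "\<not> ?thesis"
    then have "v = (\<lambda>z. 0)" by (auto simp: fun_eq_iff)
    then show False using Suc(2) by simp
  qed
  then obtain q where q: "v q > 0" by blast
  define v' where "v' = (\<lambda>z. v (g q z) - (if g q z = q then 1 else 0))"
  have "sum v UNIV = v q + sum v (UNIV - {q})" by (rule sum.remove) auto
  moreover have "sum (\<lambda>z. v z - (if z = q then 1 else 0)) UNIV = (v q - 1) + sum (\<lambda>z. v z - (if z = q then 1 else 0)) (UNIV - {q})"
    by (subst sum.remove) auto
  moreover have "sum (\<lambda>z. v z - (if z = q then 1 else 0)) (UNIV - {q}) = sum v (UNIV - {q})"
    by (rule sum.cong) auto
  ultimately have "sum (\<lambda>z. v z - (if z = q then 1 else 0)) UNIV = n" using q Suc(2) by simp
  then have "sum v' UNIV = n" unfolding v'_def using sum_comp_g[of "\<lambda>z. v z - (if z = q then 1 else 0)" q] by simp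
  then obtain w' where w': "Z g w' = v'" using Suc(1) by blast
  have "Z g (q # w') = v" using q by (auto simp: w' v'_def fun_eq_iff)
  then show ?case by blast
qed

lemma Z_cons_exists: "v q > 0 \<Longrightarrow> \<exists>c. Z g (q # c) = v"
proof -
  assume q: "v q > 0"
  obtain c where c: "Z g c = (\<lambda>z. v (g q z) - (if g q z = q then 1 else 0))" using Z_surj by blast
  have "Z g (q # c) = v" using q by (auto simp: c fun_eq_iff)
  then show ?thesis by blast
qed

lemma Z_cons_inj: "Z g (x # a) = Z g (x # b) \<Longrightarrow> Z g a = Z g b"
proof
  fix z assume "Z g (x # a) = Z g (x # b)"
  then have "Z g (x # a) (g x z) = Z g (x # b) (g x z)" by simp
  then show "Z g a z = Z g b z" by simp
qed

lemma ESS_aux: "length w1 = n \<Longrightarrow> Z g w1 = Z g w2 \<Longrightarrow> weq g f (pos w1) (pos w2)"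
proof (induction n arbitrary: w1 w2)
  case 0
  then have "w1 = []" by simp
  then have "Z g w2 = (\<lambda>z. 0)" using 0 by simp
  then have "length w2 = 0" using Z_length[of w2] by simp
  then show ?case using \<open>w1 = []\<close> by (simp add: weq_refl)
next
  case (Suc n)
  obtain x a where w1: "w1 = x # a" and la: "length a = n" using Suc(2) by (cases w1) auto
  have "length w2 = Suc n" using Z_length[of w1] Z_length[of w2] Suc(2,3) by simp
  then obtain y b where w2: "w2 = y # b" and lb: "length b = n" by (cases w2) auto
  have eqZ: "Z g (x # a) = Z g (y # b)" using Suc w1 w2 by simp
  show ?case
  proof (cases "x = y")
    case True
    then have "Z g a = Z g b" using eqZ Z_cons_inj by blast
    then have "weq g f (pos a) (pos b)" using Suc.IH la by blast
    then show ?thesis using w1 w2 True by (simp add: pos_def weq_consI)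
  next
    case False
    define z where "z = inv_into UNIV (g x) y"
    have gz: "g x z = y" by (simp add: z_def)
    have "Z g (y # b) y > 0" by simp
    moreover have "Z g (x # a) y = Z g a z" using False by (simp add: z_def)
    ultimately have "Z g a z > 0" using eqZ by (metis (no_types))
    then obtain c where c: "Z g (z # c) = Z g a" using Z_cons_exists by blast
    have s1: "weq g f (pos a) (pos (z # c))" using Suc.IH[OF la] c by simp
    have s2: "weq g f (pos (x # z # c)) (pos (y # f z x # c))"
      using weq_appR[OF weq_rel[of g f x z], of "pos c"] gz by (simp add: pos_def)
    have "Z g (y # f z x # c) = Z g (x # z # c)" using weq_Z[OF s2] by simp
    also have "\<dots> = Z g (x # a)" using c by simp
    finally have "Z g (y # f z x # c) = Z g (y # b)" using eqZ by simp
    then have "Z g b = Z g (f z x # c)" using Z_cons_inj by metis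
    then have s3: "weq g f (pos b) (pos (f z x # c))" using Suc.IH[OF lb] by blast
    have "weq g f (pos (x # a)) (pos (x # z # c))" using weq_consI[OF s1] by (simp add: pos_def)
    then have "weq g f (pos (x # a)) (pos (y # f z x # c))" using s2 weq_trans by blast
    moreover have "weq g f (pos (y # f z x # c)) (pos (y # b))"
      using weq_consI[OF weq_sym[OF s3]] by (simp add: pos_def)
    ultimately show ?thesis using w1 w2 weq_trans by blast
  qed
qed

lemma ESS: "Z g w1 = Z g w2 \<Longrightarrow> weq g f (pos w1) (pos w2)"
  using ESS_aux by blast

end



definition cls :: "('a \<Rightarrow> 'a \<Rightarrow> 'a) \<Rightarrow> ('a \<Rightarrow> 'a \<Rightarrow> 'a) \<Rightarrow> ('a \<times> bool) list \<Rightarrow> ('a \<times> bool) list set" where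
  "cls g f w = {v. weq g f w v}"

definition invw :: "('a \<times> bool) list \<Rightarrow> ('a \<times> bool) list" where
  "invw w = rev (map (\<lambda>(x, b). (x, \<not> b)) w)"

lemma cls_eq_iff: "cls g f u = cls g f v \<longleftrightarrow> weq g f u v"
proof
  assume "cls g f u = cls g f v"
  then have "v \<in> cls g f u" by (simp add: cls_def weq_refl)
  then show "weq g f u v" by (simp add: cls_def)
next
  assume "weq g f u v"
  then show "cls g f u = cls g f v"
    by (auto simp: cls_def intro: weq_trans weq_sym)
qed

lemma carrier_SG: "carrier (structure_group g f) = range (cls g f)"
  by (auto simp: structure_group_def quotient_def cls_def Image_def)

lemma mult_SG_aux: "(\<exists>a\<in>cls g f u. \<exists>b\<in>cls g f v. weq g f w (a @ b)) \<longleftrightarrow> w \<in> cls g f (u @ v)"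
proof
  assume "\<exists>a\<in>cls g f u. \<exists>b\<in>cls g f v. weq g f w (a @ b)"
  then obtain a b where a: "weq g f u a" and b: "weq g f v b" and w: "weq g f w (a @ b)"
    by (auto simp: cls_def)
  have "weq g f (u @ v) (a @ v)" by (rule weq_appR[OF a])
  moreover have "weq g f (a @ v) (a @ b)" by (rule weq_appL[OF b])
  ultimately show "w \<in> cls g f (u @ v)" using w by (auto simp: cls_def intro: weq_trans weq_sym)
next
  assume "w \<in> cls g f (u @ v)"
  then show "\<exists>a\<in>cls g f u. \<exists>b\<in>cls g f v. weq g f w (a @ b)"
    by (auto simp: cls_def intro!: bexI[of _ u] bexI[of _ v] weq_refl weq_sym)
qed

lemma mult_SG: "cls g f u \<otimes>\<^bsub>structure_group g f\<^esub> cls g f v = cls g f (u @ v)"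
  unfolding structure_group_def using mult_SG_aux[of g f u v] by auto

lemma one_SG: "\<one>\<^bsub>structure_group g f\<^esub> = cls g f []"
  by (auto simp: structure_group_def cls_def intro: weq_sym)

lemma weq_invw: "weq g f (invw w @ w) []"
proof (induction w)
  case Nil then show ?case by (simp add: invw_def weq_refl)
next
  case (Cons l w)
  obtain x b where l: "l = (x, b)" by (cases l)
  have "invw (l # w) @ (l # w) = invw w @ ([(x, \<not> b), (x, \<not> \<not> b)] @ w)"
    by (simp add: invw_def l)
  moreover have "weq g f (invw w @ ([(x, \<not> b), (x, \<not> \<not> b)] @ w)) (invw w @ ([] @ w))"
    by (rule weq_appL[OF weq_appR[OF weq_cancel]])
  ultimately show ?case using Cons weq_trans by fastforce
qed

lemma group_SG: "group (structure_group g f)"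
proof (rule groupI)
  fix x y assume "x \<in> carrier (structure_group g f)" "y \<in> carrier (structure_group g f)"
  then show "x \<otimes>\<^bsub>structure_group g f\<^esub> y \<in> carrier (structure_group g f)"
    by (auto simp: carrier_SG mult_SG)
next
  show "\<one>\<^bsub>structure_group g f\<^esub> \<in> carrier (structure_group g f)"
    by (simp add: carrier_SG one_SG)
next
  fix x y z assume "x \<in> carrier (structure_group g f)" "y \<in> carrier (structure_group g f)"
    "z \<in> carrier (structure_group g f)"
  then show "x \<otimes>\<^bsub>structure_group g f\<^esub> y \<otimes>\<^bsub>structure_group g f\<^esub> z =
     x \<otimes>\<^bsub>structure_group g f\<^esub> (y \<otimes>\<^bsub>structure_group g f\<^esub> z)"
    by (auto simp: carrier_SG mult_SG)
next
  fix x assume "x \<in> carrier (structure_group g f)"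
  then show "\<one>\<^bsub>structure_group g f\<^esub> \<otimes>\<^bsub>structure_group g f\<^esub> x = x"
    by (auto simp: carrier_SG mult_SG one_SG)
next
  fix x assume "x \<in> carrier (structure_group g f)"
  then obtain w where x: "x = cls g f w" by (auto simp: carrier_SG)
  have "cls g f (invw w) \<otimes>\<^bsub>structure_group g f\<^esub> x = \<one>\<^bsub>structure_group g f\<^esub>"
    using weq_invw[of g f w] by (simp add: x mult_SG one_SG cls_eq_iff)
  then show "\<exists>y\<in>carrier (structure_group g f). y \<otimes>\<^bsub>structure_group g f\<^esub> x = \<one>\<^bsub>structure_group g f\<^esub>"
    by (auto simp: carrier_SG)
qed

lemma inv_SG: "inv\<^bsub>structure_group g f\<^esub> (cls g f w) = cls g f (invw w)"
proof -
  interpret group "structure_group g f" by (rule group_SG)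
  show ?thesis
    by (rule inv_equality) (use weq_invw[of g f w] in \<open>auto simp: mult_SG one_SG cls_eq_iff carrier_SG\<close>)
qed

lemma pow_SG: "cls g f [(x, False)] [^]\<^bsub>structure_group g f\<^esub> (k::nat) = cls g f (pos (replicate k x))"
proof (induction k)
  case 0 then show ?case by (simp add: one_SG pos_def)
next
  case (Suc k)
  interpret group "structure_group g f" by (rule group_SG)
  have "cls g f [(x, False)] [^]\<^bsub>structure_group g f\<^esub> Suc k =
        cls g f [(x, False)] [^]\<^bsub>structure_group g f\<^esub> k \<otimes>\<^bsub>structure_group g f\<^esub> cls g f [(x, False)]"
    by simp
  also have "\<dots> = cls g f (pos (replicate k x) @ [(x, False)])" by (simp add: Suc mult_SG)
  also have "pos (replicate k x) @ [(x, False)] = pos (replicate (Suc k) x)"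
    by (simp add: pos_def replicate_append_same)
  finally show ?case .
qed




context group
begin

lemma cancA: "x \<in> carrier G \<Longrightarrow> y \<in> carrier G \<Longrightarrow> inv x \<otimes> (x \<otimes> y) = y"
  by (simp add: m_assoc[symmetric])
lemma cancB: "x \<in> carrier G \<Longrightarrow> y \<in> carrier G \<Longrightarrow> x \<otimes> (inv x \<otimes> y) = y"
  by (simp add: m_assoc[symmetric])

lemma telescope:
  assumes N: "N \<in> carrier G" and X: "X \<in> carrier G"
  shows "foldr (\<lambda>h acc. h \<otimes> (N \<otimes> X \<otimes> inv N \<otimes> inv X) \<otimes> inv h \<otimes> acc) (map (\<lambda>i. X [^] i) [a..<a+m]) \<one>
     = X [^] a \<otimes> (N \<otimes> (X [^] m \<otimes> (inv N \<otimes> inv (X [^] (a + m)))))"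
proof (induction m arbitrary: a)
  case 0
  show ?case using N X by (simp add: cancB)
next
  case (Suc m)
  have l: "[a..<a + Suc m] = a # [Suc a..<Suc a + m]" by (simp add: upt_rec)
  have "foldr (\<lambda>h acc. h \<otimes> (N \<otimes> X \<otimes> inv N \<otimes> inv X) \<otimes> inv h \<otimes> acc) (map (\<lambda>i. X [^] i) [a..<a+Suc m]) \<one>
     = X [^] a \<otimes> (N \<otimes> X \<otimes> inv N \<otimes> inv X) \<otimes> inv (X [^] a) \<otimes>
       (X [^] Suc a \<otimes> (N \<otimes> (X [^] m \<otimes> (inv N \<otimes> inv (X [^] (Suc a + m))))))"
    by (simp only: l list.map foldr.simps o_apply Suc.IH)
  also have "\<dots> = X [^] a \<otimes> (N \<otimes> (X \<otimes> (inv N \<otimes> (inv X \<otimes> (inv (X [^] a) \<otimes>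
       (X [^] a \<otimes> (X \<otimes> (N \<otimes> (X [^] m \<otimes> (inv N \<otimes> inv (X [^] (Suc a + m))))))))))))"
    using N X by (simp add: m_assoc)
  also have "\<dots> = X [^] a \<otimes> (N \<otimes> (X \<otimes> (X [^] m \<otimes> (inv N \<otimes> inv (X [^] (Suc a + m))))))"
    using N X by (simp add: cancA)
  also have "\<dots> = X [^] a \<otimes> (N \<otimes> (X [^] Suc m \<otimes> (inv N \<otimes> inv (X [^] (a + Suc m)))))"
    using N X by (simp add: m_assoc[symmetric] nat_pow_Suc2[symmetric] del: nat_pow_Suc)
  finally show ?case .
qed

lemma telescope0:
  assumes N: "N \<in> carrier G" and X: "X \<in> carrier G" and c: "N \<otimes> X [^] k = X [^] k \<otimes> N"
  shows "foldr (\<lambda>h acc. h \<otimes> (N \<otimes> X \<otimes> inv N \<otimes> inv X) \<otimes> inv h \<otimes> acc) (map (\<lambda>i. X [^] i) [0..<k]) \<one> = \<one>"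
proof -
  have "foldr (\<lambda>h acc. h \<otimes> (N \<otimes> X \<otimes> inv N \<otimes> inv X) \<otimes> inv h \<otimes> acc) (map (\<lambda>i. X [^] i) [0..<0+k]) \<one>
     = X [^] (0::nat) \<otimes> (N \<otimes> (X [^] k \<otimes> (inv N \<otimes> inv (X [^] (0 + k)))))"
    by (rule telescope[OF N X])
  also have "\<dots> = (N \<otimes> X [^] k) \<otimes> (inv N \<otimes> inv (X [^] k))" using N X by (simp add: m_assoc)
  also have "\<dots> = \<one>" using N X by (simp add: c m_assoc cancA cancB)
  finally show ?thesis by simp
qed

lemma gt_not_bo:
  assumes t: "t \<in> carrier G" "t \<noteq> \<one>" and hs: "hs \<noteq> []" "set hs \<subseteq> carrier G"
    and fo: "foldr (\<lambda>h acc. h \<otimes> t \<otimes> inv h \<otimes> acc) hs \<one> = \<one>"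
  shows "\<not> bi_orderable G"
proof
  assume "bi_orderable G"
  then obtain R where irr: "\<forall>a\<in>carrier G. \<not> R a a"
    and tr: "\<forall>a\<in>carrier G. \<forall>b\<in>carrier G. \<forall>c\<in>carrier G. R a b \<longrightarrow> R b c \<longrightarrow> R a c"
    and tot: "\<forall>a\<in>carrier G. \<forall>b\<in>carrier G. a \<noteq> b \<longrightarrow> R a b \<or> R b a"
    and inv: "\<forall>a\<in>carrier G. \<forall>b\<in>carrier G. \<forall>c\<in>carrier G. R a b \<longrightarrow> R (c \<otimes> a) (c \<otimes> b) \<and> R (a \<otimes> c) (b \<otimes> c)"
    unfolding bi_orderable_def by blast
  have key: "\<And>Q. (\<forall>a\<in>carrier G. \<forall>b\<in>carrier G. \<forall>c\<in>carrier G. Q a b \<longrightarrow> Q b c \<longrightarrow> Q a c) \<Longrightarrow>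
     (\<forall>a\<in>carrier G. \<forall>b\<in>carrier G. \<forall>c\<in>carrier G. Q a b \<longrightarrow> Q (c \<otimes> a) (c \<otimes> b) \<and> Q (a \<otimes> c) (b \<otimes> c)) \<Longrightarrow>
     Q \<one> t \<Longrightarrow> Q \<one> (foldr (\<lambda>h acc. h \<otimes> t \<otimes> inv h \<otimes> acc) hs \<one>)"
  proof -
    fix Q assume qt: "\<forall>a\<in>carrier G. \<forall>b\<in>carrier G. \<forall>c\<in>carrier G. Q a b \<longrightarrow> Q b c \<longrightarrow> Q a c"
      and qi: "\<forall>a\<in>carrier G. \<forall>b\<in>carrier G. \<forall>c\<in>carrier G. Q a b \<longrightarrow> Q (c \<otimes> a) (c \<otimes> b) \<and> Q (a \<otimes> c) (b \<otimes> c)"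
      and q1: "Q \<one> t"
    have conj: "Q \<one> (h \<otimes> t \<otimes> inv h)" if h: "h \<in> carrier G" for h
    proof -
      have "Q (h \<otimes> \<one>) (h \<otimes> t)" using qi[rule_format, OF one_closed t(1) h q1] by blast
      then have "Q (h \<otimes> \<one> \<otimes> inv h) (h \<otimes> t \<otimes> inv h)"
        using qi[rule_format, OF _ _ inv_closed[OF h], of "h \<otimes> \<one>" "h \<otimes> t"] h t by simp
      then show ?thesis using h by simp
    qed
    have "\<And>hs. hs \<noteq> [] \<Longrightarrow> set hs \<subseteq> carrier G \<Longrightarrow>
        Q \<one> (foldr (\<lambda>h acc. h \<otimes> t \<otimes> inv h \<otimes> acc) hs \<one>) \<and>
        foldr (\<lambda>h acc. h \<otimes> t \<otimes> inv h \<otimes> acc) hs \<one> \<in> carrier G"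
    proof -
      fix hs :: "'a list"
      show "hs \<noteq> [] \<Longrightarrow> set hs \<subseteq> carrier G \<Longrightarrow>
        Q \<one> (foldr (\<lambda>h acc. h \<otimes> t \<otimes> inv h \<otimes> acc) hs \<one>) \<and>
        foldr (\<lambda>h acc. h \<otimes> t \<otimes> inv h \<otimes> acc) hs \<one> \<in> carrier G"
      proof (induction hs)
        case Nil then show ?case by simp
      next
        case (Cons h hs)
        have h: "h \<in> carrier G" using Cons by simp
        show ?case
        proof (cases "hs = []")
          case True then show ?thesis using conj[OF h] h t by simp
        next
          case False
          then have ih: "Q \<one> (foldr (\<lambda>h acc. h \<otimes> t \<otimes> inv h \<otimes> acc) hs \<one>)"
            "foldr (\<lambda>h acc. h \<otimes> t \<otimes> inv h \<otimes> acc) hs \<one> \<in> carrier G" using Cons by auto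
          define F where "F = foldr (\<lambda>h acc. h \<otimes> t \<otimes> inv h \<otimes> acc) hs \<one>"
          define c where "c = h \<otimes> t \<otimes> inv h"
          have cc: "c \<in> carrier G" using h t by (simp add: c_def)
          have "Q (\<one> \<otimes> F) (c \<otimes> F)"
            using qi[rule_format, OF one_closed cc ih(2)[folded F_def] conj[OF h, folded c_def]] by blast
          then have "Q F (c \<otimes> F)" using ih unfolding F_def by simp
          then have "Q \<one> (c \<otimes> F)"
            using qt[rule_format, OF one_closed ih(2)[folded F_def] m_closed[OF cc ih(2)[folded F_def]] ih(1)[folded F_def]] by blast
          then show ?thesis using cc ih unfolding F_def c_def by simp
        qed
      qed
    qed
    then show "Q \<one> (foldr (\<lambda>h acc. h \<otimes> t \<otimes> inv h \<otimes> acc) hs \<one>)" using hs by blast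
  qed
  have "R \<one> t \<or> R t \<one>" using tot t by auto
  then show False
  proof
    assume "R \<one> t"
    then have "R \<one> (foldr (\<lambda>h acc. h \<otimes> t \<otimes> inv h \<otimes> acc) hs \<one>)" using key[of R] tr inv by blast
    then have "R \<one> \<one>" by (simp only: fo)
    then show False using irr by auto
  next
    assume "R t \<one>"
    moreover have "\<forall>a\<in>carrier G. \<forall>b\<in>carrier G. \<forall>c\<in>carrier G. R b a \<longrightarrow> R c b \<longrightarrow> R c a"
      using tr by blast
    moreover have "\<forall>a\<in>carrier G. \<forall>b\<in>carrier G. \<forall>c\<in>carrier G. R b a \<longrightarrow> R (c \<otimes> b) (c \<otimes> a) \<and> R (b \<otimes> c) (a \<otimes> c)"
      using inv by blast
    ultimately have "R (foldr (\<lambda>h acc. h \<otimes> t \<otimes> inv h \<otimes> acc) hs \<one>) \<one>" using key[of "\<lambda>a b. R b a"] by blast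
    then have "R \<one> \<one>" by (simp only: fo)
    then show False using irr by auto
  qed
qed

end



lemma Ph_Phi: "(\<And>x. bij (g x)) \<Longrightarrow> Ph g w (Phi g w z) = z"
proof (induction w arbitrary: z)
  case (Cons x w)
  have "g x (inv_into UNIV (g x) y) = y" for y using Cons.prems[of x] by (simp add: bij_is_surj surj_f_inv_f)
  then show ?case using Cons by simp
qed simp

lemma pos_append: "pos (a @ b) = pos a @ pos b" by (simp add: pos_def)

lemma Z_append: "Z g (a @ b) z = Z g a z + Z g b (Phi g a z)"
proof -
  have "Cw g (pos (a @ b)) = tm (Cw g (pos a)) (Cw g (pos b))" by (simp add: pos_append Cw_append)
  then have "int (Z g (a @ b) z) = int (Z g a z) + int (Z g b (Phi g a z))"
    by (simp add: Cw_pos tm_def fun_eq_iff)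
  then show ?thesis by simp
qed

lemma Ph_append: "Ph g (a @ b) = Ph g a \<circ> Ph g b" by (induction a) auto
lemma Phi_append: "Phi g (a @ b) = Phi g b \<circ> Phi g a" by (induction a) auto

lemma Ph_rep: "Ph g (replicate k x) = g x ^^ k" by (induction k) auto

fun useq :: "('a \<Rightarrow> 'a \<Rightarrow> 'a) \<Rightarrow> 'a \<Rightarrow> nat \<Rightarrow> 'a list" where
  "useq g p 0 = []"
| "useq g p (Suc k) = useq g p k @ [Phi g (useq g p k) p]"

lemma invw_invw: "invw (invw w) = w"
  by (simp add: invw_def rev_map case_prod_beta comp_def)

lemma weq_invw2: "weq g f (w @ invw w) []"
  using weq_invw[of g f "invw w"] by (simp add: invw_invw)

lemma not_inj_nat: "\<not> inj (h :: nat \<Rightarrow> 'b) \<Longrightarrow> \<exists>i j. i < j \<and> h i = h j"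
proof -
  assume "\<not> inj h"
  then obtain x y where xy: "x \<noteq> y" "h x = h y" unfolding inj_def by blast
  show ?thesis
  proof (cases "x < y")
    case True then show ?thesis using xy by blast
  next
    case False then have "y < x" using xy by simp
    then show ?thesis using xy(2)[symmetric] by (intro exI[of _ y] exI[of _ x]) simp
  qed
qed

context sol
begin

lemma PhPhi: "Ph g w (Phi g w z) = z"
  by (rule Ph_Phi) (rule bj)

lemma Phi_inj: "Phi g w a = Phi g w b \<Longrightarrow> a = b"
proof -
  assume h: "Phi g w a = Phi g w b"
  have "a = Ph g w (Phi g w a)" by (rule PhPhi[symmetric])
  also have "\<dots> = Ph g w (Phi g w b)" by (simp only: h)
  also have "\<dots> = b" by (rule PhPhi)
  finally show ?thesis .
qed

lemma Z_useq: "Z g (useq g p k) = (\<lambda>z. if z = p then k else 0)"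
proof (induction k)
  case (Suc k)
  show ?case
  proof
    fix z
    have "Z g (useq g p (Suc k)) z = Z g (useq g p k) z + (if Phi g (useq g p k) z = Phi g (useq g p k) p then 1 else 0)"
      by (simp add: Z_append)
    also have "\<dots> = (if z = p then Suc k else 0)"
    proof (cases "z = p")
      case True then show ?thesis using Suc by simp
    next
      case False
      then have "Phi g (useq g p k) z \<noteq> Phi g (useq g p k) p" using Phi_inj by blast
      then show ?thesis using Suc False by simp
    qed
    finally show "Z g (useq g p (Suc k)) z = (if z = p then Suc k else 0)" .
  qed
qed simp

lemma main:
  assumes gp: "g x0 p \<noteq> p"
  shows "\<exists>t. generalized_torsion (structure_group g f) t"
proof -
  let ?G = "structure_group g f"
  interpret G: group ?G by (rule group_SG)
  have "\<not> inj (\<lambda>n. g x0 ^^ n)"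
  proof
    assume "inj (\<lambda>n. g x0 ^^ n)"
    then have "finite (UNIV :: nat set)"
      by (rule finite_imageD[rotated]) (rule finite_subset[of _ UNIV], auto)
    then show False by simp
  qed
  then obtain i1 j1 where ij1: "i1 < j1" "g x0 ^^ i1 = g x0 ^^ j1" using not_inj_nat by blast
  have k: "(g x0 ^^ (j1 - i1)) = id" "j1 - i1 > 0"
  proof -
    have bi: "bij (g x0 ^^ i1)" using bj[of x0] by (rule bij_fn)
    have *: "(g x0 ^^ (j1 - i1)) ((g x0 ^^ i1) y) = (g x0 ^^ i1) y" for y
      using ij1 funpow_add[of "j1 - i1" i1 "g x0"] by (simp add: fun_eq_iff)
    have "(g x0 ^^ (j1 - i1)) z = z" for z
    proof -
      fix z
      have "z = (g x0 ^^ i1) (inv_into UNIV (g x0 ^^ i1) z)" using bi by (simp add: bij_is_surj surj_f_inv_f)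
      then show "(g x0 ^^ (j1 - i1)) z = z" using *[of "inv_into UNIV (g x0 ^^ i1) z"] by simp
    qed
    then show "(g x0 ^^ (j1 - i1)) = id" by auto
    show "j1 - i1 > 0" using ij1 by simp
  qed
  define k where "k = j1 - i1"
  note k = k[folded k_def]
  define xk where "xk = replicate k x0"
  have Phxk: "Ph g xk = id" by (simp add: xk_def Ph_rep k)
  have Phixk: "Phi g xk z = z" for z using PhPhi[of xk z] by (simp add: Phxk)
  define F where "F = (\<lambda>n. (Ph g (useq g p n), Phi g (useq g p n)))"
  have "\<not> inj F"
  proof
    assume "inj F"
    then have "finite (UNIV :: nat set)"
      by (rule finite_imageD[of F UNIV, rotated]) (rule finite_subset[of _ UNIV], auto)
    then show False by simp
  qed
  then obtain i j where ij: "i < j" "F i = F j" using not_inj_nat by blast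
  define ui where "ui = useq g p i"
  define uj where "uj = useq g p j"
  have Pheq: "Ph g uj = Ph g ui" and Phieq: "Phi g uj = Phi g ui"
    using ij unfolding F_def ui_def uj_def by auto
  obtain A where A: "Z g A = (\<lambda>z. Z g xk (Ph g ui z))" using Z_surj by blast
  have e1: "Z g (ui @ A) = Z g (xk @ ui)"
    by (auto simp: fun_eq_iff Z_append A PhPhi Phixk)
  have e2: "Z g (uj @ A) = Z g (xk @ uj)"
    by (auto simp: fun_eq_iff Z_append A PhPhi Phixk Pheq[symmetric])
  have w1: "weq g f (pos ui @ pos A) (pos xk @ pos ui)" using ESS[OF e1] by (simp add: pos_append)
  have w2: "weq g f (pos uj @ pos A) (pos xk @ pos uj)" using ESS[OF e2] by (simp add: pos_append)
  define Ui where "Ui = cls g f (pos ui)"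
  define Uj where "Uj = cls g f (pos uj)"
  define A' where "A' = cls g f (pos A)"
  define X where "X = cls g f [(x0, False)]"
  define N where "N = Uj \<otimes>\<^bsub>?G\<^esub> inv\<^bsub>?G\<^esub> Ui"
  have car: "Ui \<in> carrier ?G" "Uj \<in> carrier ?G" "A' \<in> carrier ?G" "X \<in> carrier ?G"
    by (auto simp: Ui_def Uj_def A'_def X_def carrier_SG)
  have Xk: "X [^]\<^bsub>?G\<^esub> k = cls g f (pos xk)" by (simp add: X_def pow_SG xk_def)
  have Xkc: "X [^]\<^bsub>?G\<^esub> k \<in> carrier ?G" using car by simp
  have r1: "Ui \<otimes>\<^bsub>?G\<^esub> A' = X [^]\<^bsub>?G\<^esub> k \<otimes>\<^bsub>?G\<^esub> Ui"
    using w1 by (simp add: Ui_def A'_def Xk mult_SG cls_eq_iff)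
  have r2: "Uj \<otimes>\<^bsub>?G\<^esub> A' = X [^]\<^bsub>?G\<^esub> k \<otimes>\<^bsub>?G\<^esub> Uj"
    using w2 by (simp add: Uj_def A'_def Xk mult_SG cls_eq_iff)
  have Nc: "N \<in> carrier ?G" using car by (simp add: N_def)
  have r3: "inv\<^bsub>?G\<^esub> Ui \<otimes>\<^bsub>?G\<^esub> X [^]\<^bsub>?G\<^esub> k = A' \<otimes>\<^bsub>?G\<^esub> inv\<^bsub>?G\<^esub> Ui"
  proof -
    have "inv\<^bsub>?G\<^esub> Ui \<otimes>\<^bsub>?G\<^esub> X [^]\<^bsub>?G\<^esub> k = inv\<^bsub>?G\<^esub> Ui \<otimes>\<^bsub>?G\<^esub> (X [^]\<^bsub>?G\<^esub> k \<otimes>\<^bsub>?G\<^esub> Ui) \<otimes>\<^bsub>?G\<^esub> inv\<^bsub>?G\<^esub> Ui"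
      using car by (simp add: G.m_assoc)
    also have "\<dots> = A' \<otimes>\<^bsub>?G\<^esub> inv\<^bsub>?G\<^esub> Ui" using car by (simp add: r1[symmetric] G.cancA)
    finally show ?thesis .
  qed
  have comm: "N \<otimes>\<^bsub>?G\<^esub> X [^]\<^bsub>?G\<^esub> k = X [^]\<^bsub>?G\<^esub> k \<otimes>\<^bsub>?G\<^esub> N"
  proof -
    have "N \<otimes>\<^bsub>?G\<^esub> X [^]\<^bsub>?G\<^esub> k = Uj \<otimes>\<^bsub>?G\<^esub> (inv\<^bsub>?G\<^esub> Ui \<otimes>\<^bsub>?G\<^esub> X [^]\<^bsub>?G\<^esub> k)"
      using car by (simp add: N_def G.m_assoc)
    also have "\<dots> = (Uj \<otimes>\<^bsub>?G\<^esub> A') \<otimes>\<^bsub>?G\<^esub> inv\<^bsub>?G\<^esub> Ui" using car by (simp add: r3 G.m_assoc)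
    also have "\<dots> = X [^]\<^bsub>?G\<^esub> k \<otimes>\<^bsub>?G\<^esub> N" using car by (simp add: r2 N_def G.m_assoc)
    finally show ?thesis .
  qed
  define t where "t = N \<otimes>\<^bsub>?G\<^esub> X \<otimes>\<^bsub>?G\<^esub> inv\<^bsub>?G\<^esub> N \<otimes>\<^bsub>?G\<^esub> inv\<^bsub>?G\<^esub> X"
  define hs where "hs = map (\<lambda>i. X [^]\<^bsub>?G\<^esub> i) [0..<k]"
  have fo: "foldr (\<lambda>h acc. h \<otimes>\<^bsub>?G\<^esub> t \<otimes>\<^bsub>?G\<^esub> inv\<^bsub>?G\<^esub> h \<otimes>\<^bsub>?G\<^esub> acc) hs \<one>\<^bsub>?G\<^esub> = \<one>\<^bsub>?G\<^esub>"
    unfolding t_def hs_def by (rule G.telescope0[OF Nc car(4) comm])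
  have tc: "t \<in> carrier ?G" using car Nc by (simp add: t_def)
  have hsc: "set hs \<subseteq> carrier ?G" "hs \<noteq> []" using car k by (auto simp: hs_def)
  have tne: "t \<noteq> \<one>\<^bsub>?G\<^esub>"
  proof
    assume "t = \<one>\<^bsub>?G\<^esub>"
    then have "(N \<otimes>\<^bsub>?G\<^esub> X) \<otimes>\<^bsub>?G\<^esub> inv\<^bsub>?G\<^esub> (X \<otimes>\<^bsub>?G\<^esub> N) = \<one>\<^bsub>?G\<^esub>"
      using car Nc by (simp add: t_def G.inv_mult_group G.m_assoc)
    then have eq: "N \<otimes>\<^bsub>?G\<^esub> X = X \<otimes>\<^bsub>?G\<^esub> N"
    proof -
      have "N \<otimes>\<^bsub>?G\<^esub> X = ((N \<otimes>\<^bsub>?G\<^esub> X) \<otimes>\<^bsub>?G\<^esub> inv\<^bsub>?G\<^esub> (X \<otimes>\<^bsub>?G\<^esub> N)) \<otimes>\<^bsub>?G\<^esub> (X \<otimes>\<^bsub>?G\<^esub> N)"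
        using car Nc by (simp add: G.m_assoc del: G.inv_mult_group)
      then show ?thesis using \<open>(N \<otimes>\<^bsub>?G\<^esub> X) \<otimes>\<^bsub>?G\<^esub> inv\<^bsub>?G\<^esub> (X \<otimes>\<^bsub>?G\<^esub> N) = \<one>\<^bsub>?G\<^esub>\<close> car Nc by simp
    qed
    define W where "W = pos uj @ invw (pos ui)"
    have NW: "N = cls g f W" by (simp add: N_def Uj_def Ui_def W_def inv_SG mult_SG)
    have "weq g f (W @ [(x0, False)]) ([(x0, False)] @ W)"
      using eq by (simp add: NW X_def mult_SG cls_eq_iff)
    then have ceq: "Cw g (W @ [(x0, False)]) = Cw g ([(x0, False)] @ W)" by (rule Cw_weq')
    define D where "D = ((\<lambda>z. if z = p then int j - int i else 0), (id :: 'a \<Rightarrow> 'a), (id :: 'a \<Rightarrow> 'a))"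
    have CD: "Cw g (pos uj) = tm D (Cw g (pos ui))"
      using Pheq Phieq unfolding ui_def uj_def by (auto simp: Cw_pos D_def tm_def fun_eq_iff Z_useq)
    have "Cw g (pos ui @ invw (pos ui)) = tone" using Cw_weq'[OF weq_invw2] by simp
    then have CW: "Cw g W = D" by (simp add: W_def Cw_append CD tm_assoc)
    from ceq have "fst (Cw g (W @ [(x0, False)])) p = fst (Cw g ([(x0, False)] @ W)) p" by simp
    then have "(int j - int i) + ev x0 p = ev x0 p + (if inv_into UNIV (g x0) p = p then int j - int i else 0)"
      by (simp add: Cw_append CW D_def tm_def tone_def)
    moreover have "inv_into UNIV (g x0) p \<noteq> p" proof
      assume "inv_into UNIV (g x0) p = p"
      then have "g x0 (inv_into UNIV (g x0) p) = g x0 p" by simp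
      then show False using gp by simp
    qed
    ultimately show False using ij by simp
  qed
  show ?thesis unfolding generalized_torsion_def using tc tne hsc fo by blast
qed

end



theorem theorem1:
  fixes g f :: "'a::finite \<Rightarrow> 'a \<Rightarrow> 'a"
  assumes "bij (sol_map g f)"
    and "non_degenerate g f"
    and "symmetric_sol g f"
    and "\<not> trivial_sol g f"
  shows "\<not> bi_orderable (structure_group g f) \<and>
         (\<exists>t. generalized_torsion (structure_group g f) t)"
proof -
  have bj: "\<And>x. bij (g x)" using assms(2) by (simp add: non_degenerate_def)
  have inv: "sol_map g f \<circ> sol_map g f = id" and brd: "braided_sol g f"
    using assms(3) by (auto simp: symmetric_sol_def involutive_sol_def)
  have i1: "g (g x y) (f y x) = x" for x y
  proof -
    have "(sol_map g f \<circ> sol_map g f) (x, y) = (x, y)" using inv by simp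
    then show ?thesis by (simp add: sol_map_def)
  qed
  have br: "g (g x y) \<circ> g (f y x) = g x \<circ> g y" for x y
  proof
    fix z
    have "(S12 (sol_map g f) \<circ> S23 (sol_map g f) \<circ> S12 (sol_map g f)) (x, y, z)
        = (S23 (sol_map g f) \<circ> S12 (sol_map g f) \<circ> S23 (sol_map g f)) (x, y, z)"
      using brd by (simp add: braided_sol_def)
    then have "fst ((S12 (sol_map g f) \<circ> S23 (sol_map g f) \<circ> S12 (sol_map g f)) (x, y, z))
        = fst ((S23 (sol_map g f) \<circ> S12 (sol_map g f) \<circ> S23 (sol_map g f)) (x, y, z))" by simp
    then show "(g (g x y) \<circ> g (f y x)) z = (g x \<circ> g y) z"
      by (simp add: S12_def S23_def sol_map_def Let_def)
  qed
  interpret sol g f using bj i1 br by unfold_locales auto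
  have "\<exists>x0 p. g x0 p \<noteq> p"
  proof (rule ccontr)
    assume "\<not> ?thesis"
    then have gid: "g x p = p" for x p by blast
    have "f y x = x" for x y using i1[of x y] by (simp add: gid)
    then have "trivial_sol g f" by (auto simp: trivial_sol_def fun_eq_iff gid)
    then show False using assms(4) by simp
  qed
  then obtain x0 p where "g x0 p \<noteq> p" by blast
  then obtain t where gt: "generalized_torsion (structure_group g f) t" using main by blast
  interpret G: group "structure_group g f" by (rule group_SG)
  have "\<not> bi_orderable (structure_group g f)"
  proof -
    from gt obtain hs where "t \<in> carrier (structure_group g f)" "t \<noteq> \<one>\<^bsub>structure_group g f\<^esub>"
      "hs \<noteq> []" "set hs \<subseteq> carrier (structure_group g f)"
      "foldr (\<lambda>h acc. h \<otimes>\<^bsub>structure_group g f\<^esub> t \<otimes>\<^bsub>structure_group g f\<^esub> inv\<^bsub>structure_group g f\<^esub> h \<otimes>\<^bsub>structure_group g f\<^esub> acc) hs \<one>\<^bsub>structure_group g f\<^esub> = \<one>\<^bsub>structure_group g f\<^esub>"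
      unfolding generalized_torsion_def by blast
    then show ?thesis by (rule G.gt_not_bo)
  qed
  then show ?thesis using gt by blast
qed



end
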